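(* Let $Y$ be a sober space and let $X=\{y\in Y\mid \forall i\in I,\ y\in U_i\Rightarrow y\in V_i\}$ for some family $(U_i,V_i)_{i\in I}$ (of arbitrary cardinality) of pairs of open subsets of $Y$. Then $X$, with the subspace topology, is sober. In particular, every LCS-complete space is sober.
   Context: A space is sober if every irreducible closed subset is the closure of a unique point. A space is LCS-complete if it is homeomorphic to a $G_\delta$ subset (countable intersection of open sets), with the subspace topology, of some locally compact sober space, where locally compact means every point has a neighborhood base of compact saturated sets (no separation assumed). *)

theory Defs
  imports "HOL-Analysis.Analysis"
begin

definition irreducible_in :: "'a topology \<Rightarrow> 'a set \<Rightarrow> bool" where
  "irreducible_in Y S \<longleftrightarrow> S \<subseteq> topspace Y \<and> S \<noteq> {} \<and>
     (\<forall>A B. closedin Y A \<and> closedin Y B \<and> S \<subseteq> A \<union> B \<longrightarrow> S \<subseteq> A \<or> S \<subseteq> B)"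

definition sober_space :: "'a topology \<Rightarrow> bool" where
  "sober_space Y \<longleftrightarrow> (\<forall>S. closedin Y S \<and> irreducible_in Y S \<longrightarrow>
      (\<exists>!x. x \<in> topspace Y \<and> Y closure_of {x} = S))"

definition saturated_in :: "'a topology \<Rightarrow> 'a set \<Rightarrow> bool" where
  "saturated_in Y K \<longleftrightarrow> K \<subseteq> topspace Y \<and>
     K = topspace Y \<inter> \<Inter>{U. openin Y U \<and> K \<subseteq> U}"

definition locally_compact_sat :: "'a topology \<Rightarrow> bool" where
  "locally_compact_sat Y \<longleftrightarrow> (\<forall>x \<in> topspace Y. \<forall>U. openin Y U \<and> x \<in> U \<longrightarrow>
     (\<exists>K. compactin Y K \<and> saturated_in Y K \<and> x \<in> Y interior_of K \<and> K \<subseteq> U))"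

end

theory Submission
  imports Defs
begin

lemma irr_closure:
  assumes X: "X \<subseteq> topspace Y" and S: "irreducible_in (subtopology Y X) S"
  shows "irreducible_in Y (Y closure_of S)"
proof -
  have SX: "S \<subseteq> X" "S \<noteq> {}" using S X by (auto simp: irreducible_in_def)
  have SY: "S \<subseteq> topspace Y" using SX X by auto
  show ?thesis unfolding irreducible_in_def
  proof (intro conjI allI impI)
    show "Y closure_of S \<subseteq> topspace Y" by (rule closure_of_subset_topspace)
    show "Y closure_of S \<noteq> {}" using SX(2) closure_of_subset[OF SY] by blast
    fix A B assume h: "closedin Y A \<and> closedin Y B \<and> Y closure_of S \<subseteq> A \<union> B"
    have "closedin (subtopology Y X) (X \<inter> A)" "closedin (subtopology Y X) (X \<inter> B)"
      using h by (auto simp: closedin_subtopology)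
    moreover have "S \<subseteq> (X \<inter> A) \<union> (X \<inter> B)" using h SX(1) closure_of_subset[OF SY] by blast
    ultimately have "S \<subseteq> X \<inter> A \<or> S \<subseteq> X \<inter> B" using S unfolding irreducible_in_def by blast
    then show "Y closure_of S \<subseteq> A \<or> Y closure_of S \<subseteq> B"
      using h closure_of_minimal[of S A Y] closure_of_minimal[of S B Y] by blast
  qed
qed

lemma irr_single:
  assumes "x \<in> topspace Y" shows "irreducible_in Y (Y closure_of {x})"
proof -
  have "irreducible_in (subtopology Y (topspace Y)) {x}"
    unfolding irreducible_in_def
  proof (intro conjI allI impI)
    fix A B assume "closedin (subtopology Y (topspace Y)) A \<and> closedin (subtopology Y (topspace Y)) B \<and> {x} \<subseteq> A \<union> B"
    then show "{x} \<subseteq> A \<or> {x} \<subseteq> B" by blast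
  qed (use assms in auto)
  then show ?thesis using irr_closure[of "topspace Y" Y "{x}"] by blast
qed

lemma part1:
  assumes sob: "sober_space Y" and op: "\<forall>i\<in>I. openin Y (U i) \<and> openin Y (V i)"
  shows "sober_space (subtopology Y {y \<in> topspace Y. \<forall>i\<in>I. y \<in> U i \<longrightarrow> y \<in> V i})"
proof -
  define X where "X = {y \<in> topspace Y. \<forall>i\<in>I. y \<in> U i \<longrightarrow> y \<in> V i}"
  have XY: "X \<subseteq> topspace Y" by (auto simp: X_def)
  have clX: "subtopology Y X closure_of T = X \<inter> Y closure_of T" if "T \<subseteq> X" for T
    using that by (simp add: closure_of_subtopology inf_commute inf.absorb1 Int_absorb1)
  have uniqY: "x = x'" if "x \<in> topspace Y" "x' \<in> topspace Y" "Y closure_of {x} = Y closure_of {x'}" for x x'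
  proof -
    have "\<exists>!z. z \<in> topspace Y \<and> Y closure_of {z} = Y closure_of {x}"
      using spec[OF sob[unfolded sober_space_def], of "Y closure_of {x}"] irr_single[OF that(1)] by simp
    then show ?thesis using that by blast
  qed
  show ?thesis unfolding sober_space_def X_def[symmetric]
  proof (intro allI impI)
    fix S assume h: "closedin (subtopology Y X) S \<and> irreducible_in (subtopology Y X) S"
    have SX: "S \<subseteq> X" using h by (auto simp: irreducible_in_def)
    define C where "C = Y closure_of S"
    have "irreducible_in Y C" unfolding C_def using irr_closure[OF XY] h by blast
    moreover have "closedin Y C" by (simp add: C_def)
    ultimately obtain y where y: "y \<in> topspace Y" "Y closure_of {y} = C"
      using spec[OF sob[unfolded sober_space_def], of C] by blast
    have yX: "y \<in> X"
    proof (rule ccontr)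
      assume "y \<notin> X"
      then obtain i where i: "i \<in> I" "y \<in> U i" "y \<notin> V i" using y by (auto simp: X_def)
      have yC: "y \<in> C" using y closure_of_subset[of "{y}" Y] by simp
      obtain s where s: "s \<in> S" "s \<in> U i"
        using op i yC unfolding C_def in_closure_of by blast
      have "s \<in> V i" using s SX i by (auto simp: X_def)
      have "s \<in> C" unfolding C_def using s SX XY closure_of_subset[of S Y] by blast
      then have "s \<in> Y closure_of {y}" using y by simp
      then have "y \<in> V i" using \<open>s \<in> V i\<close> op i unfolding in_closure_of by blast
      then show False using i by simp
    qed
    have "subtopology Y X closure_of {y} = X \<inter> C" using clX yX y by auto
    also have "\<dots> = S"
    proof -
      have "subtopology Y X closure_of S = S" using h by (simp add: closure_of_closedin)
      then show ?thesis unfolding C_def using clX[OF SX] by simp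
    qed
    finally have ex: "subtopology Y X closure_of {y} = S" .
    show "\<exists>!x. x \<in> topspace (subtopology Y X) \<and> subtopology Y X closure_of {x} = S"
    proof (rule ex1I[where a=y])
      show "y \<in> topspace (subtopology Y X) \<and> subtopology Y X closure_of {y} = S"
        using ex yX XY by auto
      fix x assume x: "x \<in> topspace (subtopology Y X) \<and> subtopology Y X closure_of {x} = S"
      have xX: "x \<in> X" using x by auto
      have clS: "Y closure_of S = Y closure_of {x}"
        if "x \<in> X" "subtopology Y X closure_of {x} = S" for x
      proof -
        have "subtopology Y X closure_of {x} = X \<inter> Y closure_of {x}" using clX that(1) by simp
        then have "S = X \<inter> Y closure_of {x}" using that(2) by simp
        then have "S \<subseteq> Y closure_of {x}" "x \<in> S" using that XY closure_of_subset[of "{x}" Y] by blast+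
        then show ?thesis
          using closure_of_minimal[OF \<open>S \<subseteq> Y closure_of {x}\<close> closedin_closure_of]
            closure_of_mono[of "{x}" S Y] by blast
      qed
      have eqxy: "Y closure_of {x} = Y closure_of {y}"
        by (rule trans[OF sym[OF clS[OF xX conjunct2[OF x]]] clS[OF yX ex]])
      have "x \<in> topspace Y" "y \<in> topspace Y" using xX yX XY by auto
      then show "x = y" by (rule uniqY[OF _ _ eqxy])
    qed
  qed
qed

lemma sober_homeo:
  assumes hom: "homeomorphic_map X Z f" and sob: "sober_space Z"
  shows "sober_space X"
proof -
  have fim: "f ` topspace X = topspace Z" and inj: "inj_on f (topspace X)"
    and cont: "continuous_map X Z f"
    using hom by (auto simp: homeomorphic_eq_everything_map)
  have irr: "irreducible_in Z (f ` S)" if "irreducible_in X S" for S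
    unfolding irreducible_in_def
  proof (intro conjI allI impI)
    show "f ` S \<subseteq> topspace Z" "f ` S \<noteq> {}" using that fim by (auto simp: irreducible_in_def)
    fix A B assume h: "closedin Z A \<and> closedin Z B \<and> f ` S \<subseteq> A \<union> B"
    have "closedin X {x \<in> topspace X. f x \<in> A}" "closedin X {x \<in> topspace X. f x \<in> B}"
      using h cont closedin_continuous_map_preimage by blast+
    moreover have "S \<subseteq> {x \<in> topspace X. f x \<in> A} \<union> {x \<in> topspace X. f x \<in> B}"
      using h that by (auto simp: irreducible_in_def)
    ultimately have "S \<subseteq> {x \<in> topspace X. f x \<in> A} \<or> S \<subseteq> {x \<in> topspace X. f x \<in> B}"
      using that unfolding irreducible_in_def by blast
    then show "f ` S \<subseteq> A \<or> f ` S \<subseteq> B" by auto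
  qed
  have cl: "Z closure_of {f x} = f ` (X closure_of {x})" if "x \<in> topspace X" for x
    using homeomorphic_map_closure_of[OF hom, of "{x}"] that by simp
  have imgeq: "S = T" if "S \<subseteq> topspace X" "T \<subseteq> topspace X" "f ` S = f ` T" for S T
    using inj that by (metis inj_on_image_eq_iff)
  show ?thesis unfolding sober_space_def
  proof (intro allI impI)
    fix S assume h: "closedin X S \<and> irreducible_in X S"
    have ST: "S \<subseteq> topspace X" using h closedin_subset by blast
    have cZ: "closedin Z (f ` S)" using h homeomorphic_map_closedness_eq[OF hom] by blast
    have iZ: "irreducible_in Z (f ` S)" using irr h by blast
    obtain z where z: "z \<in> topspace Z" "Z closure_of {z} = f ` S"
      using spec[OF sob[unfolded sober_space_def], of "f ` S"] cZ iZ by blast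
    obtain x where x: "x \<in> topspace X" "z = f x" using z fim by blast
    have ex: "X closure_of {x} = S"
    proof -
      have "f ` (X closure_of {x}) = f ` S" using cl[OF x(1)] z x(2) by simp
      then show ?thesis using imgeq[OF closure_of_subset_topspace ST] by blast
    qed
    show "\<exists>!x. x \<in> topspace X \<and> X closure_of {x} = S"
    proof (rule ex1I[where a=x])
      show "x \<in> topspace X \<and> X closure_of {x} = S" using x ex by simp
      fix x' assume x': "x' \<in> topspace X \<and> X closure_of {x'} = S"
      have "Z closure_of {f x'} = Z closure_of {f x}"
        using cl[OF conjunct1[OF x']] cl[OF x(1)] conjunct2[OF x'] ex by simp
      note eq = this
      have fx: "f x \<in> topspace Z" "f x' \<in> topspace Z"
        using imageI[OF x(1), of f] imageI[OF conjunct1[OF x'], of f] fim by simp_all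
      have irrZ: "irreducible_in Z (Z closure_of {f x})" by (rule irr_single[OF fx(1)])
      have E: "\<exists>!z. z \<in> topspace Z \<and> Z closure_of {z} = Z closure_of {f x}"
        by (rule mp[OF spec[OF sob[unfolded sober_space_def]]]) (use irrZ in simp)
      have "f x' = f x" using ex1E[OF E] fx eq by metis
      then show "x' = x" using inj x x' by (meson inj_onD)
    qed
  qed
qed

theorem proposition7p1:
  shows "(\<forall>(Y :: 'a topology) (I :: 'i set) (U :: 'i \<Rightarrow> 'a set) V.
            sober_space Y \<and> (\<forall>i\<in>I. openin Y (U i) \<and> openin Y (V i)) \<longrightarrow>
            sober_space (subtopology Y {y \<in> topspace Y. \<forall>i\<in>I. y \<in> U i \<longrightarrow> y \<in> V i}))
       \<and> (\<forall>(X :: 'b topology) (Y :: 'c topology) G.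
            locally_compact_sat Y \<and> sober_space Y \<and> gdelta_in Y G \<and>
            X homeomorphic_space subtopology Y G \<longrightarrow> sober_space X)"
proof (intro conjI allI impI)
  fix Y :: "'a topology" and I :: "'i set" and U :: "'i \<Rightarrow> 'a set" and V
  assume "sober_space Y \<and> (\<forall>i\<in>I. openin Y (U i) \<and> openin Y (V i))"
  then show "sober_space (subtopology Y {y \<in> topspace Y. \<forall>i\<in>I. y \<in> U i \<longrightarrow> y \<in> V i})"
    using part1 by blast
next
  fix X :: "'b topology" and Y :: "'c topology" and G
  assume h: "locally_compact_sat Y \<and> sober_space Y \<and> gdelta_in Y G \<and>
            X homeomorphic_space subtopology Y G"
  then obtain \<U> where U: "countable \<U>" "\<U> \<subseteq> Collect (openin Y)" "topspace Y \<inter> \<Inter>\<U> = G"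
    unfolding gdelta_in_def relative_to_def intersection_of_def by blast
  have "G = {y \<in> topspace Y. \<forall>W\<in>\<U>. y \<in> topspace Y \<longrightarrow> y \<in> id W}" using U by auto
  moreover have "\<forall>W\<in>\<U>. openin Y ((\<lambda>_. topspace Y) W) \<and> openin Y (id W)" using U by auto
  ultimately have "sober_space (subtopology Y G)"
    using part1[of Y \<U> "\<lambda>_. topspace Y" id] h by simp
  moreover obtain f where "homeomorphic_map X (subtopology Y G) f"
    using h homeomorphic_space by blast
  ultimately show "sober_space X" using sober_homeo by blast
qed

end
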